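(* Let $\ell\ge 3$ be an odd integer, let $k=\binom{\ell}{(\ell-1)/2}$, and let $n>k$. Define \[ \mathcal{J}=\{S\subseteq[\ell]: |S|\le \tfrac{\ell-1}{2}\},\quad \mathcal{K}=\{S\cup\{\ell+1,\dots,\ell+t\}: 1\le t\le n-\ell,\ S\subseteq[\ell],\ |S|=\tfrac{\ell-1}{2}\}, \] \[ \mathcal{L}=\{S\cup\{\ell+1,\dots,n\}: S\subseteq[\ell],\ |S|\ge \tfrac{\ell+1}{2}\}. \] Then $\mathcal{F}=\mathcal{J}\cup\mathcal{K}\cup\mathcal{L}$ is induced-$\mathcal{A}_{k+1}$-saturated in $\mathcal{B}_n$, and $|\mathcal{F}|=2^\ell+(n-\ell)k$. Consequently $\mathrm{isat}(n,\mathcal{A}_{k+1})\le 2^\ell+(n-\ell)k$.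
   Context: $\mathcal{B}_n$ denotes the Boolean lattice $(2^{[n]},\subseteq)$, $[n]=\{1,\dots,n\}$. A poset $\mathcal{P}'$ is an induced subposet of $\mathcal{P}$ if there is an injection $f$ with $u\le' v\iff f(u)\le f(v)$. A family $\mathcal{F}\subseteq 2^{[n]}$ (ordered by inclusion) is induced-$\mathcal{P}$-saturated if it contains no induced copy of $\mathcal{P}$ but every strictly larger family $\mathcal{F}'\subseteq 2^{[n]}$ does. $\mathrm{isat}(n,\mathcal{P})$ is the minimum size of such a family. $\mathcal{A}_m$ is the $m$-element antichain. *)

theory Defs
  imports Main
begin

definition has_induced_copy :: "'a set \<Rightarrow> ('a \<Rightarrow> 'a \<Rightarrow> bool) \<Rightarrow> 'b set set \<Rightarrow> bool" where
  "has_induced_copy P le F \<longleftrightarrow>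
     (\<exists>f. inj_on f P \<and> f ` P \<subseteq> F \<and> (\<forall>u\<in>P. \<forall>v\<in>P. le u v \<longleftrightarrow> f u \<subseteq> f v))"

definition antichain_carrier :: "nat \<Rightarrow> nat set" where
  "antichain_carrier m = {..<m}"

definition antichain_le :: "nat \<Rightarrow> nat \<Rightarrow> bool" where
  "antichain_le u v \<longleftrightarrow> u = v"

definition induced_saturated :: "nat \<Rightarrow> 'a set \<Rightarrow> ('a \<Rightarrow> 'a \<Rightarrow> bool) \<Rightarrow> nat set set \<Rightarrow> bool" where
  "induced_saturated n P le F \<longleftrightarrow>
     F \<subseteq> Pow {1..n} \<and> \<not> has_induced_copy P le F \<and>
     (\<forall>F'. F \<subset> F' \<and> F' \<subseteq> Pow {1..n} \<longrightarrow> has_induced_copy P le F')"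

definition isat :: "nat \<Rightarrow> 'a set \<Rightarrow> ('a \<Rightarrow> 'a \<Rightarrow> bool) \<Rightarrow> nat" where
  "isat n P le = (LEAST s. \<exists>F. induced_saturated n P le F \<and> card F = s)"

end

theory Submission imports Defs Complex_Main "HOL.Binomial_Plus" begin
definition antich :: "'a set set \<Rightarrow> bool" where
  "antich A \<longleftrightarrow> (\<forall>X\<in>A. \<forall>Y\<in>A. X \<subseteq> Y \<longrightarrow> X = Y)"

lemma lym:
  "finite U \<Longrightarrow> card U = n \<Longrightarrow> A \<subseteq> Pow U \<Longrightarrow> antich A \<Longrightarrow>
   (\<Sum>X\<in>A. 1 / real (n choose card X)) \<le> 1"
proof (induction n arbitrary: U A)
  case 0
  then have "U = {}" by auto
  with 0 have "A \<subseteq> {{}}" by auto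
  then have "A = {} \<or> A = {{}}" by auto
  then show ?case by auto
next
  case (Suc n)
  have finA: "finite A" using Suc.prems by (meson finite_Pow_iff rev_finite_subset)
  show ?case
  proof (cases "{} \<in> A")
    case True
    then have "A = {{}}" using Suc.prems(4) unfolding antich_def by blast
    then show ?thesis by simp
  next
    case False
    define f where "f X = 1 / real (n choose (card X - 1))" for X :: "'a set"
    have IH: "(\<Sum>X\<in>{X\<in>A. x\<in>X}. f X) \<le> 1" if x: "x \<in> U" for x
    proof -
      let ?B = "(\<lambda>X. X - {x}) ` {X\<in>A. x\<in>X}"
      have inj: "inj_on (\<lambda>X. X - {x}) {X\<in>A. x\<in>X}"
        by (rule inj_onI) blast
      have "(\<Sum>Y\<in>?B. 1 / real (n choose card Y)) \<le> 1"
      proof (rule Suc.IH[of "U - {x}"])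
        show "finite (U - {x})" using Suc.prems by auto
        show "card (U - {x}) = n" using Suc.prems x by auto
        show "?B \<subseteq> Pow (U - {x})" using Suc.prems by auto
        show "antich ?B" using Suc.prems(4) unfolding antich_def
          by (smt (verit, del_insts) Diff_insert_absorb image_iff insert_mono mem_Collect_eq mk_disjoint_insert)
      qed
      also have "(\<Sum>Y\<in>?B. 1 / real (n choose card Y)) = (\<Sum>X\<in>{X\<in>A. x\<in>X}. f X)"
        apply (subst sum.reindex[OF inj])
        apply (rule sum.cong)
         apply simp
        using finA Suc.prems(3) by (auto simp: f_def intro!: arg_cong[where f="\<lambda>m. 1 / real (n choose m)"] card_Diff_singleton
             dest!: rev_finite_subset[of U] )
      finally show ?thesis .
    qed
    have "(\<Sum>x\<in>U. \<Sum>X\<in>{X\<in>A. x\<in>X}. f X) \<le> (\<Sum>x\<in>U. 1)"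
      by (rule sum_mono) (rule IH)
    also have "\<dots> = real (Suc n)" using Suc.prems by simp
    also have "(\<Sum>x\<in>U. \<Sum>X\<in>{X\<in>A. x\<in>X}. f X) = (\<Sum>x\<in>U. \<Sum>X\<in>A. if x \<in> X then f X else 0)"
      using finA by (simp add: sum.inter_filter)
    also have "\<dots> = (\<Sum>X\<in>A. \<Sum>x\<in>U. if x \<in> X then f X else 0)"
      by (rule sum.swap)
    also have "\<dots> = (\<Sum>X\<in>A. real (card X) * f X)"
    proof (rule sum.cong)
      fix X assume X: "X \<in> A"
      then have "X \<subseteq> U" using Suc.prems by auto
      then have "U \<inter> X = X" by auto
      have "(\<Sum>x\<in>U. if x \<in> X then f X else 0) = (\<Sum>x\<in>U \<inter> X. f X)"
        using Suc.prems by (simp add: sum.If_cases)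
      also have "\<dots> = real (card X) * f X" using \<open>U \<inter> X = X\<close> by simp
      finally show "(\<Sum>x\<in>U. if x \<in> X then f X else 0) = real (card X) * f X" .
    qed simp
    also have "\<dots> = (\<Sum>X\<in>A. real (Suc n) * (1 / real (Suc n choose card X)))"
    proof (rule sum.cong)
      fix X assume X: "X \<in> A"
      then have XU: "X \<subseteq> U" using Suc.prems by auto
      have fin: "finite X" using XU Suc.prems rev_finite_subset by blast
      have ne: "X \<noteq> {}" using X False by auto
      then obtain j where j: "card X = Suc j" using fin by (cases "card X") auto
      have le: "card X \<le> Suc n" using XU Suc.prems card_mono by metis
      have eq: "real (Suc j) * real (Suc n choose Suc j) = real (Suc n) * real (n choose j)"
        using binomial_absorption[of j "Suc n"] by (metis diff_Suc_1 of_nat_mult)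
      have p1: "(n choose j) > 0" using le j by simp
      have p2: "(Suc n choose Suc j) > 0" using le j by simp
      have gen: "\<And>a b c d :: real. c * a = d * b \<Longrightarrow> a > 0 \<Longrightarrow> b > 0 \<Longrightarrow> c * (1 / b) = d * (1 / a)"
        by (simp add: field_simps)
      have "real (Suc j) * (1 / real (n choose j)) = real (Suc n) * (1 / real (Suc n choose Suc j))"
        by (rule gen[OF eq]) (use p1 p2 in \<open>simp_all del: binomial_Suc_Suc\<close>)
      then show "real (card X) * f X = real (Suc n) * (1 / real (Suc n choose card X))"
        unfolding f_def j by simp
    qed simp
    also have "\<dots> = real (Suc n) * (\<Sum>X\<in>A. 1 / real (Suc n choose card X))"
      by (simp add: sum_distrib_left)
    finally show ?thesis by simp
  qed
qed

lemma sperner: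
  assumes "finite U" "A \<subseteq> Pow U" "antich A"
  shows "card A \<le> card U choose (card U div 2)"
proof -
  let ?c = "card U choose (card U div 2)"
  have finA: "finite A" using assms by (meson finite_Pow_iff rev_finite_subset)
  have pos: "?c > 0" by simp
  have "(\<Sum>X\<in>A. 1 / real ?c) \<le> (\<Sum>X\<in>A. 1 / real (card U choose card X))"
  proof (rule sum_mono)
    fix X assume "X \<in> A"
    then have "card X \<le> card U" using assms by (meson PowD card_mono subsetD)
    then have "(card U choose card X) > 0" by simp
    then show "1 / real ?c \<le> 1 / real (card U choose card X)"
      using binomial_maximum[of "card U" "card X"]
      by (simp add: frac_le)
  qed
  also have "\<dots> \<le> 1" using lym[OF assms(1) refl assms(2,3)] .
  finally have "real (card A) / real ?c \<le> 1" by simp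
  then have "real (card A) \<le> real ?c" using pos by (simp add: divide_le_eq)
  then show ?thesis by simp
qed
lemma copy_iff:
  "has_induced_copy (antichain_carrier m) antichain_le G \<longleftrightarrow>
   (\<exists>B. B \<subseteq> G \<and> finite B \<and> card B = m \<and> antich B)"
proof
  assume "has_induced_copy (antichain_carrier m) antichain_le G"
  then obtain f where f: "inj_on f {..<m}" "f ` {..<m} \<subseteq> G"
    "\<forall>u\<in>{..<m}. \<forall>v\<in>{..<m}. u = v \<longleftrightarrow> f u \<subseteq> f v"
    unfolding has_induced_copy_def antichain_carrier_def antichain_le_def by blast
  have "antich (f ` {..<m})" unfolding antich_def
  proof (intro ballI impI)
    fix X Y assume "X \<in> f ` {..<m}" "Y \<in> f ` {..<m}" "X \<subseteq> Y"
    then obtain u v where "u \<in> {..<m}" "v \<in> {..<m}" "X = f u" "Y = f v" by blast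
    then show "X = Y" using f(3) \<open>X \<subseteq> Y\<close> by metis
  qed
  moreover have "card (f ` {..<m}) = m" using f(1) by (simp add: card_image)
  moreover have "finite (f ` {..<m})" by simp
  ultimately show "\<exists>B. B \<subseteq> G \<and> finite B \<and> card B = m \<and> antich B" using f(2) by blast
next
  assume "\<exists>B. B \<subseteq> G \<and> finite B \<and> card B = m \<and> antich B"
  then obtain B where B: "B \<subseteq> G" "finite B" "card B = m" "antich B" by blast
  obtain h where h: "bij_betw h {0..<card B} B" using ex_bij_betw_nat_finite[OF B(2)] by blast
  then have h1: "inj_on h {..<m}" using B(3) by (simp add: bij_betw_def atLeast0LessThan)
  have h2: "h ` {..<m} = B" using h B(3) by (simp add: bij_betw_def atLeast0LessThan)
  have h3: "\<forall>u\<in>{..<m}. \<forall>v\<in>{..<m}. u = v \<longleftrightarrow> h u \<subseteq> h v"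
  proof (intro ballI iffI)
    fix u v assume uv: "u \<in> {..<m}" "v \<in> {..<m}" "h u \<subseteq> h v"
    have "h u \<in> B" "h v \<in> B" using uv h2 by auto
    then have "h u = h v" using B(4) uv(3) unfolding antich_def by blast
    then show "u = v" using h1 uv(1,2) by (simp add: inj_on_eq_iff)
  qed simp
  have h4: "h ` {..<m} \<subseteq> G" using h2 B(1) by simp
  show "has_induced_copy (antichain_carrier m) antichain_le G"
    unfolding has_induced_copy_def antichain_carrier_def antichain_le_def
    using h1 h3 h4 by blast
qed

lemma tr_lemma:
  fixes l t :: nat
  assumes "S \<subseteq> {1..l}"
  shows "(S \<union> {l+1..l+t}) \<inter> {1..l} = S" "(S \<union> {l+1..l+t}) - {1..l} = {l+1..l+t}"
  using assms by auto

theorem mainTheorem2: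
  fixes l n :: nat
  assumes "odd l" and "l \<ge> 3" and "n > l choose ((l - 1) div 2)"
  defines "k \<equiv> l choose ((l - 1) div 2)"
  defines "J \<equiv> {S. S \<subseteq> {1..l} \<and> card S \<le> (l - 1) div 2}"
  defines "K \<equiv> {S \<union> {l+1..l+t} | S t. 1 \<le> t \<and> t \<le> n - l \<and> S \<subseteq> {1..l} \<and> card S = (l - 1) div 2}"
  defines "L \<equiv> {S \<union> {l+1..n} | S. S \<subseteq> {1..l} \<and> card S \<ge> (l + 1) div 2}"
  defines "F \<equiv> J \<union> K \<union> L"
  shows "induced_saturated n (antichain_carrier (k + 1)) antichain_le F
         \<and> card F = 2 ^ l + (n - l) * k
         \<and> isat n (antichain_carrier (k + 1)) antichain_le \<le> 2 ^ l + (n - l) * k"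
proof -
  define m where "m = (l - 1) div 2"
  have m1: "(l + 1) div 2 = m + 1" "l div 2 = m" using assms(1) unfolding m_def by (auto elim!: oddE)
  have m2: "1 \<le> m" "2 * m \<le> l" using assms(1,2) m1 unfolding m_def by (auto elim!: oddE)
  have kdef: "k = l choose m" unfolding k_def m_def ..
  have "l choose 1 \<le> l choose m" by (rule binomial_mono[OF m2])
  then have "l \<le> k" using kdef by simp
  then have nl: "l < n" using assms(3) k_def by simp
  define tr where "tr X = X \<inter> {1..l}" for X :: "nat set"
  define h where "h X = card (X - {1..l})" for X :: "nat set"
  define Lev where "Lev = {S. S \<subseteq> {1..l} \<and> card S = m}"
  define A where "A t = (\<lambda>S. S \<union> {l+1..l+t}) ` Lev" for t
  have Ldef: "L = {S \<union> {l+1..l+(n-l)} | S. S \<subseteq> {1..l} \<and> card S \<ge> m + 1}"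
    unfolding L_def m1 using nl by simp
  have Kdef: "K = {S \<union> {l+1..l+t} | S t. 1 \<le> t \<and> t \<le> n - l \<and> S \<subseteq> {1..l} \<and> card S = m}"
    unfolding K_def m_def ..
  have Jdef: "J = {S. S \<subseteq> {1..l} \<and> card S \<le> m}" unfolding J_def m_def ..
  have struct: "X \<subseteq> {1..n} \<and> X = tr X \<union> {l+1..l+h X} \<and> h X \<le> n - l \<and>
        (card (tr X) < m \<longrightarrow> h X = 0) \<and> (card (tr X) > m \<longrightarrow> h X = n - l)" if "X \<in> F" for X
  proof -
    have "X \<in> J \<or> X \<in> K \<or> X \<in> L" using that F_def by auto
    then show ?thesis
    proof (elim disjE)
      assume "X \<in> J"
      then have X: "X \<subseteq> {1..l}" "card X \<le> m" unfolding Jdef by auto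
      have e: "X - {1..l} = {}" using X by auto
      have "h X = 0" unfolding h_def by (simp only: e card.empty)
      moreover have "tr X = X" unfolding tr_def using X by auto
      ultimately have "tr X = X" "h X = 0" by auto
      then show ?thesis using X nl by auto
    next
      assume "X \<in> K"
      then obtain S t where St: "X = S \<union> {l+1..l+t}" "1 \<le> t" "t \<le> n - l" "S \<subseteq> {1..l}" "card S = m"
        unfolding Kdef by blast
      then have "tr X = S" "h X = t" unfolding tr_def h_def using tr_lemma[OF St(4), of t] by auto
      then show ?thesis using St nl by auto
    next
      assume "X \<in> L"
      then obtain S where St: "X = S \<union> {l+1..l+(n-l)}" "S \<subseteq> {1..l}" "card S \<ge> m + 1"
        unfolding Ldef by blast
      then have "tr X = S" "h X = n - l" unfolding tr_def h_def using tr_lemma[OF St(2), of "n-l"] by auto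
      then show ?thesis using St nl by auto
    qed
  qed
  have finF: "finite X" if "X \<in> F" for X using struct[OF that] finite_subset by blast
  have sub: "X \<subseteq> Y" if "X \<in> F" "Y \<in> F" "tr X \<subseteq> tr Y" "h X \<le> h Y" for X Y
  proof -
    have e: "X = tr X \<union> {l+1..l+h X}" "Y = tr Y \<union> {l+1..l+h Y}" using struct that by blast+
    have i: "{l+1..l+h X} \<subseteq> {l+1..l+h Y}" using that(4) by auto
    have "X = tr X \<union> {l+1..l+h X}" by (rule e(1))
    also have "\<dots> \<subseteq> tr Y \<union> {l+1..l+h Y}" using that(3) i by (rule Un_mono)
    also have "\<dots> = Y" using e(2) by simp
    finally show ?thesis .
  qed
  have hmono: "h X \<le> h Y" if "X \<in> F" "Y \<in> F" "card (tr X) < card (tr Y)" for X Y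
  proof (cases "card (tr X) < m")
    case True then show ?thesis using struct[OF that(1)] by simp
  next
    case False then have "card (tr Y) > m" using that(3) by simp
    then show ?thesis using struct[OF that(1)] struct[OF that(2)] by simp
  qed
  have noanti: "\<not> has_induced_copy (antichain_carrier (k + 1)) antichain_le F"
  proof
    assume "has_induced_copy (antichain_carrier (k + 1)) antichain_le F"
    then obtain B where B: "B \<subseteq> F" "finite B" "card B = k + 1" "antich B" unfolding copy_iff by blast
    have inj: "inj_on tr B"
    proof (rule inj_onI)
      fix X Y assume XY: "X \<in> B" "Y \<in> B" "tr X = tr Y"
      show "X = Y"
      proof (cases "h X \<le> h Y")
        case True
        then have "X \<subseteq> Y" using sub XY B(1) by blast
        then show ?thesis using B(4) XY unfolding antich_def by blast
      next
        case False
        then have "h Y \<le> h X" by simp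
        then have "Y \<subseteq> X" using sub[of Y X] XY B(1) by blast
        then show ?thesis using B(4) XY unfolding antich_def by blast
      qed
    qed
    have "antich (tr ` B)" unfolding antich_def
    proof (intro ballI impI)
      fix P Q assume PQ: "P \<in> tr ` B" "Q \<in> tr ` B" "P \<subseteq> Q"
      then obtain X Y where XY: "X \<in> B" "Y \<in> B" "P = tr X" "Q = tr Y" by blast
      show "P = Q"
      proof (rule ccontr)
        assume "P \<noteq> Q"
        then have "P \<subset> Q" using PQ by auto
        moreover have "finite Q" using XY unfolding tr_def by simp
        ultimately have "card (tr X) < card (tr Y)" using XY psubset_card_mono by blast
        then have "h X \<le> h Y" using hmono XY B(1) by blast
        then have "X \<subseteq> Y" using sub XY B(1) PQ by blast
        then have "X = Y" using B(4) XY unfolding antich_def by blast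
        then show False using \<open>P \<noteq> Q\<close> XY by simp
      qed
    qed
    moreover have "tr ` B \<subseteq> Pow {1..l}" unfolding tr_def by auto
    ultimately have "card (tr ` B) \<le> card {1..l} choose (card {1..l} div 2)"
      by (intro sperner) auto
    then have "card B \<le> k" using inj kdef m1 by (simp add: card_image)
    then show False using B(3) by simp
  qed
  have cardLev: "card Lev = k" unfolding Lev_def kdef using n_subsets[of "{1..l}" m] by simp
  have A_prop: "A t \<subseteq> F \<and> finite (A t) \<and> card (A t) = k \<and> antich (A t)" if "t \<le> n - l" for t
  proof -
    have injA: "inj_on (\<lambda>S. S \<union> {l+1..l+t}) Lev"
      by (rule inj_onI) (metis Lev_def mem_Collect_eq tr_lemma(1))
    have "A t \<subseteq> F"
    proof
      fix X assume "X \<in> A t"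
      then obtain S where S: "S \<in> Lev" "X = S \<union> {l+1..l+t}" unfolding A_def by blast
      show "X \<in> F"
      proof (cases "t = 0")
        case True then show ?thesis using S unfolding F_def Jdef Lev_def by auto
      next
        case False then have "X \<in> K" using S that unfolding Kdef Lev_def
          by (intro CollectI exI[of _ S] exI[of _ t]) auto
        then show ?thesis unfolding F_def by auto
      qed
    qed
    moreover have "finite Lev" unfolding Lev_def by simp
    moreover have "antich (A t)" unfolding antich_def A_def
    proof (intro ballI impI)
      fix X Y assume "X \<in> (\<lambda>S. S \<union> {l+1..l+t}) ` Lev" "Y \<in> (\<lambda>S. S \<union> {l+1..l+t}) ` Lev" "X \<subseteq> Y"
      then obtain S T where ST: "S \<in> Lev" "T \<in> Lev" "X = S \<union> {l+1..l+t}" "Y = T \<union> {l+1..l+t}" by blast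
      then have "S \<subseteq> T" using \<open>X \<subseteq> Y\<close> unfolding Lev_def by (metis Int_mono mem_Collect_eq order.refl tr_lemma(1))
      moreover have "finite T" "card S = card T" using ST unfolding Lev_def by (auto intro: finite_subset)
      ultimately have "S = T" by (simp add: card_subset_eq)
      then show "X = Y" using ST by simp
    qed
    ultimately show ?thesis using injA cardLev unfolding A_def by (simp add: card_image)
  qed
  have incomp: "\<exists>t \<le> n - l. \<forall>Y \<in> A t. \<not> X \<subseteq> Y \<and> \<not> Y \<subseteq> X" if X: "X \<subseteq> {1..n}" "X \<notin> F" for X
  proof -
    define R where "R = X - {1..l}"
    have RX: "X = tr X \<union> R" "R \<subseteq> {l+1..n}" "tr X \<subseteq> {1..l}" unfolding R_def tr_def using X by auto
    have finX: "finite X" using X finite_subset by blast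
    show ?thesis
    proof (cases "\<exists>r. R = {l+1..l+r}")
      case True
      then obtain r where r: "R = {l+1..l+r}" by blast
      show ?thesis
      proof (cases "r = 0")
        case True
        then have "X \<subseteq> {1..l}" using RX r by auto
        then have cX: "card X > m" using X(2) unfolding F_def Jdef by auto
        have "\<forall>Y\<in>A 1. \<not> X \<subseteq> Y \<and> \<not> Y \<subseteq> X"
        proof
          fix Y assume "Y \<in> A 1"
          then obtain S where S: "S \<in> Lev" "Y = S \<union> {l+1..l+1}" unfolding A_def by blast
          have "\<not> X \<subseteq> Y"
          proof
            assume "X \<subseteq> Y"
            then have "X \<subseteq> S" using \<open>X \<subseteq> {1..l}\<close> S by auto
            then have "card X \<le> card S" using S unfolding Lev_def by (auto intro: card_mono finite_subset)
            then show False using cX S unfolding Lev_def by auto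
          qed
          moreover have "\<not> Y \<subseteq> X" using S \<open>X \<subseteq> {1..l}\<close> by auto
          ultimately show "\<not> X \<subseteq> Y \<and> \<not> Y \<subseteq> X" by blast
        qed
        then show ?thesis using nl by (intro exI[of _ 1]) auto
      next
        case False
        have rle: "r \<le> n - l" using RX r False by auto
        have Xeq: "X = tr X \<union> {l+1..l+r}" using RX r by simp
        have ctr: "card (tr X) \<noteq> m"
        proof
          assume "card (tr X) = m"
          then have "X \<in> K" unfolding Kdef using Xeq False rle RX(3) by (intro CollectI exI[of _ "tr X"] exI[of _ r]) auto
          then show False using X(2) unfolding F_def by auto
        qed
        show ?thesis
        proof (cases "card (tr X) < m")
          case True
          have "\<forall>Y\<in>A 0. \<not> X \<subseteq> Y \<and> \<not> Y \<subseteq> X"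
          proof
            fix Y assume "Y \<in> A 0"
            then obtain S where S: "S \<in> Lev" "Y = S" unfolding A_def by auto
            have "l + 1 \<in> X" using RX r False by auto
            then have "\<not> X \<subseteq> Y" using S unfolding Lev_def by auto
            moreover have "\<not> Y \<subseteq> X"
            proof
              assume "Y \<subseteq> X"
              then have "S \<subseteq> tr X" using S unfolding Lev_def tr_def by auto
              then have "card S \<le> card (tr X)" using finX unfolding tr_def by (auto intro: card_mono)
              then show False using True S unfolding Lev_def by auto
            qed
            ultimately show "\<not> X \<subseteq> Y \<and> \<not> Y \<subseteq> X" by blast
          qed
          then show ?thesis by (intro exI[of _ 0]) auto
        next
          case False
          then have gt: "card (tr X) > m" using ctr by auto
          have rlt: "r < n - l"
          proof (rule ccontr)
            assume "\<not> r < n - l"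
            then have "r = n - l" using rle by simp
            then have "X \<in> L" unfolding Ldef using Xeq gt RX(3) by (intro CollectI exI[of _ "tr X"]) auto
            then show False using X(2) unfolding F_def by auto
          qed
          have "\<forall>Y\<in>A (n - l). \<not> X \<subseteq> Y \<and> \<not> Y \<subseteq> X"
          proof
            fix Y assume "Y \<in> A (n - l)"
            then obtain S where S: "S \<in> Lev" "Y = S \<union> {l+1..l+(n-l)}" unfolding A_def by blast
            have "\<not> X \<subseteq> Y"
            proof
              assume "X \<subseteq> Y"
              then have "tr X \<subseteq> S" using S unfolding tr_def Lev_def by auto
              then have "card (tr X) \<le> card S" using S unfolding Lev_def by (auto intro: card_mono finite_subset)
              then show False using gt S unfolding Lev_def by auto
            qed
            moreover have "n \<notin> X"
            proof -
              have "n \<notin> tr X" using RX(3) nl by auto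
              moreover have "n \<notin> {l+1..l+r}" using rlt by auto
              ultimately show "n \<notin> X" using Xeq by blast
            qed
            then have "\<not> Y \<subseteq> X" using S nl by auto
            ultimately show "\<not> X \<subseteq> Y \<and> \<not> Y \<subseteq> X" by blast
          qed
          then show ?thesis by (intro exI[of _ "n - l"]) auto
        qed
      qed
    next
      case False
      have ex: "\<exists>a. a \<in> {l+1..n} - R"
      proof (rule ccontr)
        assume "\<not> ?thesis"
        then have "R = {l+1..l+(n-l)}" using RX(2) nl by auto
        then show False using False by blast
      qed
      define a where "a = (LEAST a. a \<in> {l+1..n} - R)"
      have a: "a \<in> {l+1..n} - R" unfolding a_def using ex by (metis LeastI)
      have below: "{l+1..<a} \<subseteq> R"
      proof
        fix x assume "x \<in> {l+1..<a}"
        then have "x < a" "x \<in> {l+1..n}" using a by auto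
        then show "x \<in> R" using not_less_Least[of x "\<lambda>a. a \<in> {l+1..n} - R"] unfolding a_def by blast
      qed
      obtain b where b: "b \<in> R" "b > a"
      proof (rule ccontr)
        assume "\<not> thesis"
        then have "\<forall>b\<in>R. b \<le> a" using that by force
        have "R \<subseteq> {l+1..<a}"
        proof
          fix x assume x: "x \<in> R"
          then have "x \<le> a" using \<open>\<forall>b\<in>R. b \<le> a\<close> by blast
          moreover have "x \<noteq> a" using x a by blast
          moreover have "l + 1 \<le> x" using x RX(2) by auto
          ultimately show "x \<in> {l+1..<a}" by simp
        qed
        then have "R = {l+1..l+(a - 1 - l)}" using below a by auto
        then show False using False by blast
      qed
      have "\<forall>Y\<in>A (a - l). \<not> X \<subseteq> Y \<and> \<not> Y \<subseteq> X"
      proof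
        fix Y assume "Y \<in> A (a - l)"
        then obtain S where S: "S \<in> Lev" "Y = S \<union> {l+1..l+(a-l)}" unfolding A_def by blast
        have "b \<in> X" "b \<notin> Y" using b RX S a unfolding Lev_def by auto
        moreover have "a \<in> Y" "a \<notin> X" using a S RX unfolding R_def by auto
        ultimately show "\<not> X \<subseteq> Y \<and> \<not> Y \<subseteq> X" by blast
      qed
      then show ?thesis using a by (intro exI[of _ "a - l"]) auto
    qed
  qed
  have Fsub: "F \<subseteq> Pow {1..n}" using struct by blast
  have sat: "induced_saturated n (antichain_carrier (k + 1)) antichain_le F"
    unfolding induced_saturated_def
  proof (intro conjI allI impI)
    show "F \<subseteq> Pow {1..n}" by (rule Fsub)
    show "\<not> has_induced_copy (antichain_carrier (k + 1)) antichain_le F" by (rule noanti)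
    fix F' assume F': "F \<subset> F' \<and> F' \<subseteq> Pow {1..n}"
    then obtain X where X: "X \<in> F'" "X \<notin> F" by blast
    then have "X \<subseteq> {1..n}" using F' by auto
    then obtain t where t: "t \<le> n - l" "\<forall>Y \<in> A t. \<not> X \<subseteq> Y \<and> \<not> Y \<subseteq> X" using incomp X by blast
    have At: "A t \<subseteq> F" "finite (A t)" "card (A t) = k" "antich (A t)" using A_prop[OF t(1)] by auto
    have "X \<notin> A t" using At X by blast
    have "insert X (A t) \<subseteq> F' \<and> finite (insert X (A t)) \<and> card (insert X (A t)) = k + 1 \<and> antich (insert X (A t))"
      using At X F' t(2) \<open>X \<notin> A t\<close> unfolding antich_def by auto
    then show "has_induced_copy (antichain_carrier (k + 1)) antichain_le F'" unfolding copy_iff by blast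
  qed
  define g where "g S = (if card S \<le> m then S else S \<union> {l+1..l+(n-l)})" for S :: "nat set"
  have gtr: "g S \<inter> {1..l} = S" if "S \<subseteq> {1..l}" for S
  proof (cases "card S \<le> m")
    case True then show ?thesis using that unfolding g_def by auto
  next
    case False then show ?thesis using tr_lemma(1)[OF that, of "n-l"] unfolding g_def by simp
  qed
  have injg: "inj_on g (Pow {1..l})"
  proof (rule inj_onI)
    fix S T assume ST: "S \<in> Pow {1..l}" "T \<in> Pow {1..l}" "g S = g T"
    have "S = g S \<inter> {1..l}" using ST(1) gtr by simp
    also have "\<dots> = g T \<inter> {1..l}" using ST(3) by simp
    also have "\<dots> = T" using ST(2) gtr by simp
    finally show "S = T" .
  qed
  have JL: "J \<union> L = g ` Pow {1..l}"
  proof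
    show "J \<union> L \<subseteq> g ` Pow {1..l}"
    proof
      fix X assume "X \<in> J \<union> L"
      then show "X \<in> g ` Pow {1..l}"
      proof
        assume "X \<in> J" then show ?thesis unfolding Jdef g_def by (auto intro!: image_eqI[of _ _ X])
      next
        assume "X \<in> L"
        then obtain S where "X = S \<union> {l+1..l+(n-l)}" "S \<subseteq> {1..l}" "card S \<ge> m + 1" unfolding Ldef by blast
        then show ?thesis unfolding g_def by (auto intro!: image_eqI[of _ _ S])
      qed
    qed
    show "g ` Pow {1..l} \<subseteq> J \<union> L"
    proof
      fix X assume "X \<in> g ` Pow {1..l}"
      then obtain S where S: "S \<subseteq> {1..l}" "X = g S" by auto
      show "X \<in> J \<union> L"
      proof (cases "card S \<le> m")
        case True
        then have "X \<in> J" using S unfolding g_def Jdef by simp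
        then show ?thesis by blast
      next
        case False
        then have "X = S \<union> {l+1..l+(n-l)}" using S unfolding g_def by simp
        then have "X \<in> L" unfolding Ldef using S False by (intro CollectI exI[of _ S]) auto
        then show ?thesis by blast
      qed
    qed
  qed
  have cJL: "card (J \<union> L) = 2 ^ l" using JL injg by (simp add: card_image card_Pow)
  define q where "q = (\<lambda>(S, t). S \<union> {l+1..l+t})"
  have Kq: "K = q ` (Lev \<times> {1..n-l})"
  proof
    show "K \<subseteq> q ` (Lev \<times> {1..n-l})"
    proof
      fix X assume "X \<in> K"
      then obtain S t where St: "X = S \<union> {l+1..l+t}" "1 \<le> t" "t \<le> n - l" "S \<subseteq> {1..l}" "card S = m"
        unfolding Kdef by blast
      then have "(S, t) \<in> Lev \<times> {1..n-l}" "X = q (S, t)" unfolding Lev_def q_def by auto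
      then show "X \<in> q ` (Lev \<times> {1..n-l})" by blast
    qed
    show "q ` (Lev \<times> {1..n-l}) \<subseteq> K"
    proof
      fix X assume "X \<in> q ` (Lev \<times> {1..n-l})"
      then obtain S t where St: "(S, t) \<in> Lev \<times> {1..n-l}" "X = q (S, t)" by auto
      then show "X \<in> K" unfolding Kdef q_def Lev_def
        by (intro CollectI exI[of _ S] exI[of _ t]) auto
    qed
  qed
  have injq: "inj_on q (Lev \<times> {1..n-l})"
  proof (rule inj_onI)
    fix p p' assume pp: "p \<in> Lev \<times> {1..n-l}" "p' \<in> Lev \<times> {1..n-l}" "q p = q p'"
    obtain S t where p: "p = (S, t)" by (cases p)
    obtain S' t' where p': "p' = (S', t')" by (cases p')
    have S: "S \<subseteq> {1..l}" "S' \<subseteq> {1..l}" using pp p p' unfolding Lev_def by auto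
    have e: "S \<union> {l+1..l+t} = S' \<union> {l+1..l+t'}" using pp p p' unfolding q_def by simp
    have "S = S'" using tr_lemma(1)[OF S(1), of t] tr_lemma(1)[OF S(2), of t'] e by simp
    moreover have "{l+1..l+t} = {l+1..l+t'}"
    proof -
      have "{l+1..l+t} = (S \<union> {l+1..l+t}) - {1..l}" using tr_lemma(2)[OF S(1), of t] by (rule sym)
      also have "\<dots> = (S' \<union> {l+1..l+t'}) - {1..l}" using e by (rule arg_cong)
      also have "\<dots> = {l+1..l+t'}" by (rule tr_lemma(2)[OF S(2)])
      finally show ?thesis .
    qed
    then have "card {l+1..l+t} = card {l+1..l+t'}" by (rule arg_cong)
    then have "t = t'" by (simp del: atLeastAtMost_iff)
    ultimately show "p = p'" using p p' by simp
  qed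
  have cK: "card K = (n - l) * k" using Kq injq cardLev by (simp add: card_image card_cartesian_product)
  have disj: "(J \<union> L) \<inter> K = {}"
  proof (rule ccontr)
    assume "(J \<union> L) \<inter> K \<noteq> {}"
    then obtain X where X: "X \<in> J \<union> L" "X \<in> K" by blast
    then obtain S t where St: "X = S \<union> {l+1..l+t}" "1 \<le> t" "S \<subseteq> {1..l}" "card S = m" unfolding Kdef by blast
    show False using X(1)
    proof
      assume "X \<in> J" then show False using St unfolding Jdef by auto
    next
      assume "X \<in> L"
      then obtain T where T: "X = T \<union> {l+1..l+(n-l)}" "T \<subseteq> {1..l}" "card T \<ge> m + 1" unfolding Ldef by blast
      have "S = T" using tr_lemma(1)[OF St(3), of t] tr_lemma(1)[OF T(2), of "n-l"] St T by simp
      then show False using St T by simp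
    qed
  qed
  have finLev: "finite Lev" unfolding Lev_def by simp
  have finJL: "finite (J \<union> L)" "finite K" using JL Kq finLev by simp_all
  have cF: "card F = 2 ^ l + (n - l) * k"
  proof -
    have "F = (J \<union> L) \<union> K" unfolding F_def by (simp only: Un_ac)
    then have "card F = card (J \<union> L) + card K" using card_Un_disjoint[OF finJL disj] by (simp only:)
    then show ?thesis using cJL cK by (simp only:)
  qed
  have "isat n (antichain_carrier (k + 1)) antichain_le \<le> card F"
    unfolding isat_def using sat by (intro Least_le) blast
  then show ?thesis using sat cF by simp
qed

end
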